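(* Let $f\in\mathbb{R}[\mathbf{x}]$, $\mathscr{A}=\operatorname{supp}(f)$, and $\mathscr{B}=\frac12\operatorname{New}(f)\cap\mathbb{N}^n$. Define $\mathscr{B}_0=\emptyset$ and, for $p\ge1$, $\mathscr{B}_p=\{\beta\in\mathscr{B}:\exists\gamma\in\mathscr{B}\text{ with }\beta+\gamma\in\mathscr{A}\cup2\mathscr{B}_{p-1}\}$, and let $\mathscr{B}_*=\bigcup_{p\ge1}\mathscr{B}_p$. If $f=(\mathbf{x}^{\mathscr{B}})^\intercal\mathbf{G}\,\mathbf{x}^{\mathscr{B}}$ for some scaled diagonally dominant symmetric matrix $\mathbf{G}$ indexed by $\mathscr{B}$, then $f=(\mathbf{x}^{\mathscr{B}_*})^\intercal\tilde{\mathbf{G}}\,\mathbf{x}^{\mathscr{B}_*}$ for some scaled diagonally dominant symmetric matrix $\tilde{\mathbf{G}}$ indexed by $\mathscr{B}_*$.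
   Context: $\operatorname{New}(f)$ is the Newton polytope of $f$, the convex hull of $\operatorname{supp}(f)\subseteq\mathbb{N}^n$; $2S=\{2\beta:\beta\in S\}$; $\mathbf{x}^{S}=(\mathbf{x}^\beta)_{\beta\in S}$. A symmetric matrix $\mathbf{G}$ is diagonally dominant if $\mathbf{G}_{ii}\ge\sum_{j\ne i}|\mathbf{G}_{ij}|$ for every $i$, and scaled diagonally dominant if $\mathbf{D}\mathbf{G}\mathbf{D}$ is diagonally dominant for some positive definite diagonal matrix $\mathbf{D}$. *)

theory Defs
  imports "HOL-Analysis.Analysis"
begin

text \<open>Polynomials in R[x_1..x_n] are represented by their coefficient functions
  on exponent vectors (type 'n \<Rightarrow> nat, 'n a finite index type of variables),
  with finite support.\<close>

type_synonym 'n expo = "'n \<Rightarrow> nat"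
type_synonym 'n rpoly = "'n expo \<Rightarrow> real"

definition is_poly :: "'n rpoly \<Rightarrow> bool" where
  "is_poly f \<longleftrightarrow> finite {\<alpha>. f \<alpha> \<noteq> 0}"

definition supp :: "'n rpoly \<Rightarrow> 'n expo set" where
  "supp f = {\<alpha>. f \<alpha> \<noteq> 0}"

definition expo_vec :: "('n::finite) expo \<Rightarrow> real ^ 'n" where
  "expo_vec \<alpha> = (\<chi> i. real (\<alpha> i))"

definition Newton :: "('n::finite) rpoly \<Rightarrow> (real ^ 'n) set" where
  "Newton f = convex hull (expo_vec ` supp f)"

definition halfNewton :: "('n::finite) rpoly \<Rightarrow> 'n expo set" where
  "halfNewton f = {\<beta>. 2 *\<^sub>R expo_vec \<beta> \<in> Newton f}"

definition eadd :: "'n expo \<Rightarrow> 'n expo \<Rightarrow> 'n expo" where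
  "eadd \<beta> \<gamma> = (\<lambda>i. \<beta> i + \<gamma> i)"

definition gram_poly :: "'n expo set \<Rightarrow> ('n expo \<Rightarrow> 'n expo \<Rightarrow> real) \<Rightarrow> 'n rpoly" where
  "gram_poly I G = (\<lambda>\<alpha>. \<Sum>\<beta>\<in>I. \<Sum>\<gamma>\<in>I. if eadd \<beta> \<gamma> = \<alpha> then G \<beta> \<gamma> else 0)"

definition symmetric_on :: "'a set \<Rightarrow> ('a \<Rightarrow> 'a \<Rightarrow> real) \<Rightarrow> bool" where
  "symmetric_on I G \<longleftrightarrow> (\<forall>i\<in>I. \<forall>j\<in>I. G i j = G j i)"

definition diag_dominant_on :: "'a set \<Rightarrow> ('a \<Rightarrow> 'a \<Rightarrow> real) \<Rightarrow> bool" where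
  "diag_dominant_on I G \<longleftrightarrow> (\<forall>i\<in>I. G i i \<ge> (\<Sum>j\<in>I - {i}. \<bar>G i j\<bar>))"

definition sdd_on :: "'a set \<Rightarrow> ('a \<Rightarrow> 'a \<Rightarrow> real) \<Rightarrow> bool" where
  "sdd_on I G \<longleftrightarrow> (\<exists>d. (\<forall>i\<in>I. d i > 0) \<and> diag_dominant_on I (\<lambda>i j. d i * G i j * d j))"

fun Bseq :: "'n expo set \<Rightarrow> 'n expo set \<Rightarrow> nat \<Rightarrow> 'n expo set" where
  "Bseq A B 0 = {}"
| "Bseq A B (Suc p) = {\<beta>\<in>B. \<exists>\<gamma>\<in>B. eadd \<beta> \<gamma> \<in> A \<union> (\<lambda>b. eadd b b) ` Bseq A B p}"

definition Bstar :: "'n expo set \<Rightarrow> 'n expo set \<Rightarrow> 'n expo set" where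
  "Bstar A B = (\<Union>p\<in>{1..}. Bseq A B p)"

end

theory Submission
  imports Defs
begin

lemma eadd_comm: "eadd a b = eadd b a"
  unfolding eadd_def by (auto simp: add.commute)

lemma Bseq_sub: "Bseq A B p \<subseteq> B"
  by (cases p) auto

lemma Bstar_sub: "Bstar A B \<subseteq> B"
  unfolding Bstar_def using Bseq_sub by blast

lemma bad_props:
  assumes "\<beta> \<in> B" "\<beta> \<notin> Bstar A B" "\<gamma> \<in> B"
  shows "eadd \<beta> \<gamma> \<notin> A \<and> (\<forall>b\<in>Bstar A B. eadd \<beta> \<gamma> \<noteq> eadd b b)"
proof -
  have nb: "\<beta> \<notin> Bseq A B (Suc p)" for p
    using assms(2) unfolding Bstar_def by force
  have "eadd \<beta> \<gamma> \<notin> A" using nb[of 0] assms by auto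
  moreover have "eadd \<beta> \<gamma> \<noteq> eadd b b" if "b \<in> Bstar A B" for b
  proof
    assume e: "eadd \<beta> \<gamma> = eadd b b"
    from that obtain p where "b \<in> Bseq A B p" unfolding Bstar_def by auto
    then have "eadd \<beta> \<gamma> \<in> (\<lambda>b. eadd b b) ` Bseq A B p" using e by auto
    then have "\<beta> \<in> Bseq A B (Suc p)" using assms by auto
    then show False using nb by blast
  qed
  ultimately show ?thesis by blast
qed

theorem proposition7p2:
  fixes f :: "('n::finite) rpoly" and G :: "'n expo \<Rightarrow> 'n expo \<Rightarrow> real"
  assumes "is_poly f"
    and "symmetric_on (halfNewton f) G"
    and "sdd_on (halfNewton f) G"
    and "f = gram_poly (halfNewton f) G"
  shows "\<exists>G'. symmetric_on (Bstar (supp f) (halfNewton f)) G'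
            \<and> sdd_on (Bstar (supp f) (halfNewton f)) G'
            \<and> f = gram_poly (Bstar (supp f) (halfNewton f)) G'"
proof -
  define A where "A = supp f"
  define B where "B = halfNewton f"
  define S where "S = Bstar A B"
  have SB: "S \<subseteq> B" unfolding S_def by (rule Bstar_sub)
  have finB: "finite B"
  proof (rule ccontr)
    assume "\<not> finite B"
    then have "f = (\<lambda>\<alpha>. 0)" using assms(4) unfolding B_def gram_poly_def by simp
    then have "supp f = {}" unfolding supp_def by simp
    then have "B = {}" unfolding B_def halfNewton_def Newton_def by simp
    then show False using \<open>\<not> finite B\<close> by simp
  qed
  have finS: "finite S" using finB SB finite_subset by blast
  define bad where "bad \<alpha> \<longleftrightarrow> (\<exists>\<beta>\<in>B-S. \<exists>\<gamma>\<in>B. eadd \<beta> \<gamma> = \<alpha>)" for \<alpha>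
  have bad1: "f \<alpha> = 0" if "bad \<alpha>" for \<alpha>
    using that bad_props[of _ B A] unfolding bad_def S_def A_def supp_def by auto
  have bad2: "\<not> bad (eadd b b)" if "b \<in> S" for b
    using that bad_props[of _ B A] unfolding bad_def S_def by blast
  have badc: "bad (eadd \<beta> \<gamma>)" if "\<beta> \<in> B" "\<gamma> \<in> B" "\<beta> \<notin> S \<or> \<gamma> \<notin> S" for \<beta> \<gamma>
  proof (cases "\<beta> \<notin> S")
    case True
    then show ?thesis using that unfolding bad_def by blast
  next
    case False
    then have "\<gamma> \<in> B - S" using that by blast
    then show ?thesis using that(1) eadd_comm[of \<gamma> \<beta>] unfolding bad_def by blast
  qed
  define G' where "G' \<beta> \<gamma> = (if bad (eadd \<beta> \<gamma>) then 0 else G \<beta> \<gamma>)" for \<beta> \<gamma>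
  have sym: "symmetric_on S G'"
    using assms(2) SB unfolding symmetric_on_def G'_def B_def
    by (auto simp: eadd_comm)
  have sdd: "sdd_on S G'"
  proof -
    from assms(3) obtain d where dpos: "\<forall>i\<in>B. d i > 0"
      and dd: "diag_dominant_on B (\<lambda>i j. d i * G i j * d j)"
      unfolding sdd_on_def B_def by blast
    have "diag_dominant_on S (\<lambda>i j. d i * G' i j * d j)"
      unfolding diag_dominant_on_def
    proof
      fix i assume iS: "i \<in> S"
      have "(\<Sum>j\<in>S - {i}. \<bar>d i * G' i j * d j\<bar>) \<le> (\<Sum>j\<in>S - {i}. \<bar>d i * G i j * d j\<bar>)"
        by (rule sum_mono) (auto simp: G'_def)
      also have "\<dots> \<le> (\<Sum>j\<in>B - {i}. \<bar>d i * G i j * d j\<bar>)"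
        by (rule sum_mono2) (use finB SB in auto)
      also have "\<dots> \<le> d i * G i i * d i" using dd iS SB unfolding diag_dominant_on_def by auto
      also have "\<dots> = d i * G' i i * d i" using bad2[OF iS] by (simp add: G'_def)
      finally show "(\<Sum>j\<in>S - {i}. \<bar>d i * G' i j * d j\<bar>) \<le> d i * G' i i * d i" .
    qed
    then show ?thesis unfolding sdd_on_def using dpos SB by blast
  qed
  have gram: "f = gram_poly S G'"
  proof
    fix \<alpha>
    show "f \<alpha> = gram_poly S G' \<alpha>"
    proof (cases "bad \<alpha>")
      case True
      then show ?thesis using bad1[OF True] unfolding gram_poly_def G'_def
        by (auto intro!: sum.neutral)
    next
      case False
      have "f \<alpha> = (\<Sum>\<beta>\<in>B. \<Sum>\<gamma>\<in>B. if eadd \<beta> \<gamma> = \<alpha> then G \<beta> \<gamma> else 0)"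
        using assms(4) unfolding B_def gram_poly_def by metis
      also have "\<dots> = (\<Sum>\<beta>\<in>B. \<Sum>\<gamma>\<in>S. if eadd \<beta> \<gamma> = \<alpha> then G \<beta> \<gamma> else 0)"
      proof (rule sum.cong[OF refl], rule sum.mono_neutral_right[OF finB SB], safe)
        fix \<beta> \<gamma> assume "\<beta> \<in> B" "\<gamma> \<in> B" "\<gamma> \<notin> S"
        then show "(if eadd \<beta> \<gamma> = \<alpha> then G \<beta> \<gamma> else 0) = 0"
          using badc[of \<beta> \<gamma>] False by auto
      qed
      also have "\<dots> = (\<Sum>\<beta>\<in>S. \<Sum>\<gamma>\<in>S. if eadd \<beta> \<gamma> = \<alpha> then G \<beta> \<gamma> else 0)"
      proof (rule sum.mono_neutral_right[OF finB SB], safe, rule sum.neutral, safe)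
        fix \<beta> \<gamma> assume "\<beta> \<in> B" "\<beta> \<notin> S" "\<gamma> \<in> S"
        then show "(if eadd \<beta> \<gamma> = \<alpha> then G \<beta> \<gamma> else 0) = 0"
          using badc[of \<beta> \<gamma>] False SB by auto
      qed
      also have "\<dots> = gram_poly S G' \<alpha>"
        unfolding gram_poly_def G'_def using False
        by (intro sum.cong refl) auto
      finally show ?thesis .
    qed
  qed
  show ?thesis using sym sdd gram unfolding S_def A_def B_def by blast
qed

end
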